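(* Assume $\hat w=\sup_xw(x)<\infty$. Let $\lambda\ge1$ and $z_1\in\mathbb{S}$. Then $0<w(z_1)\frac{w(z_1)+2\lfloor\lambda\rfloor-\lambda}{(w(z_1)+\lfloor\lambda\rfloor)(w(z_1)+\lfloor\lambda\rfloor-1)}\le\epsilon(\lambda,z_1)\le\frac{2\hat w}{2\hat w+\lambda-1}$, and $\frac1\lambda\le b(\lambda)\le\epsilon(\lambda)\le\frac{2\hat w}{2\hat w+\lambda-1}$, where $b(\lambda)=\frac1{\lfloor\lambda\rfloor}-\frac{\lambda-\lfloor\lambda\rfloor}{(\lfloor\lambda\rfloor+1)\lfloor\lambda\rfloor}$. Moreover, for $\lambda>1$, $1<\frac{\lfloor\lambda\rfloor^2+3\lfloor\lambda\rfloor-\lambda+1}{\lfloor\lambda\rfloor^2-\lfloor\lambda\rfloor+\lambda-1}\le\frac{1+\epsilon(\lambda)}{1-\epsilon(\lambda)}\le\frac{4\hat w+\lambda-1}{\lambda-1}$.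
   Context: Let $\pi,q$ be probability densities with respect to a $\sigma$-finite measure $\mu$ on $\mathbb{X}$ with $q>0$ wherever $\pi>0$; $\pi(dx)=\pi(x)\mu(dx)$, $q(dx)=q(x)\mu(dx)$, $\mathbb{S}=\{\pi>0\}$, $w=\pi/q$ on $\mathbb{S}$ and $0$ elsewhere. For integer $N\ge1$ and $z_1\in\mathbb{S}$, $\epsilon(N,z_1)=\int_{\mathbb{X}^{N-1}}\frac{w(z_1)}{\sum_{i=1}^Nw(z_i)}\prod_{n=2}^Nq(dz_n)$ and $\epsilon(N)=\int_{\mathbb{S}}\epsilon(N,z)\pi(dz)$; for real $\lambda\ge1$ with $\beta=\lfloor\lambda\rfloor+1-\lambda$, $\epsilon(\lambda,x)=\beta\epsilon(\lfloor\lambda\rfloor,x)+(1-\beta)\epsilon(\lfloor\lambda\rfloor+1,x)$ and $\epsilon(\lambda)=\beta\epsilon(\lfloor\lambda\rfloor)+(1-\beta)\epsilon(\lfloor\lambda\rfloor+1)$. *)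

theory Defs
  imports "HOL-Probability.Probability"
begin

definition iw :: "('a \<Rightarrow> real) \<Rightarrow> ('a \<Rightarrow> real) \<Rightarrow> 'a \<Rightarrow> real" where
  "iw p q x = (if p x > 0 then p x / q x else 0)"

text \<open>epsilon(N, z1): integral over z_2..z_N drawn iid from q(dz) = q(z) mu(dz).\<close>
definition epsN :: "'a measure \<Rightarrow> ('a \<Rightarrow> real) \<Rightarrow> ('a \<Rightarrow> real) \<Rightarrow> nat \<Rightarrow> 'a \<Rightarrow> real" where
  "epsN M p q N z1 =
     (\<integral>zs. iw p q z1 / (iw p q z1 + (\<Sum>i\<in>{2..N}. iw p q (zs i)))
        \<partial>(PiM {2..N} (\<lambda>_. density M (\<lambda>x. ennreal (q x)))))"

definition epsN_avg :: "'a measure \<Rightarrow> ('a \<Rightarrow> real) \<Rightarrow> ('a \<Rightarrow> real) \<Rightarrow> nat \<Rightarrow> real" where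
  "epsN_avg M p q N =
     (LINT z:{x\<in>space M. p x > 0}|density M (\<lambda>x. ennreal (p x)). epsN M p q N z)"

definition epsL :: "'a measure \<Rightarrow> ('a \<Rightarrow> real) \<Rightarrow> ('a \<Rightarrow> real) \<Rightarrow> real \<Rightarrow> 'a \<Rightarrow> real" where
  "epsL M p q lam z =
     (let n = nat \<lfloor>lam\<rfloor>; \<beta> = real n + 1 - lam
      in \<beta> * epsN M p q n z + (1 - \<beta>) * epsN M p q (n + 1) z)"

definition epsL_avg :: "'a measure \<Rightarrow> ('a \<Rightarrow> real) \<Rightarrow> ('a \<Rightarrow> real) \<Rightarrow> real \<Rightarrow> real" where
  "epsL_avg M p q lam =
     (let n = nat \<lfloor>lam\<rfloor>; \<beta> = real n + 1 - lam
      in \<beta> * epsN_avg M p q n + (1 - \<beta>) * epsN_avg M p q (n + 1))"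

definition blam :: "real \<Rightarrow> real" where
  "blam lam = 1 / real (nat \<lfloor>lam\<rfloor>)
     - (lam - real (nat \<lfloor>lam\<rfloor>)) / ((real (nat \<lfloor>lam\<rfloor>) + 1) * real (nat \<lfloor>lam\<rfloor>))"

end

theory Submission
  imports Defs
begin



lemma aux1: fixes c d e :: real assumes "d \<noteq> 0" "e \<noteq> 0"
  shows "c/e - (c/d - c/d^2*(e-d)) = c*(e-d)^2/(e*d^2)"
  using assms by (simp add: field_simps) algebra

lemma tangent_low:
  fixes c m s :: real assumes "c > 0" "m \<ge> 0" "s \<ge> 0"
  shows "c/(c+m) - c/(c+m)^2 * (s - m) \<le> c/(c+s)"
proof -
  have "c/(c+s) - (c/(c+m) - c/(c+m)^2 * (s - m)) = c*(s-m)^2/((c+s)*(c+m)^2)"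
    using aux1[of "c+m" "c+s" c] assms by simp
  also have "\<dots> \<ge> 0" using assms by simp
  finally show ?thesis by simp
qed

lemma aux2: fixes a d e :: real assumes "d \<noteq> 0" "e \<noteq> 0"
  shows "1 - (2*d-a)/d^2 * (e-a) + 1/d^2*(e-a)^2 - a/e = (e-a)*(e-d)^2/(d^2*e)"
  using assms by (simp add: field_simps) algebra

lemma quad_up:
  fixes a c s t :: real assumes "0 < c" "c \<le> a" "s \<ge> 0" "t \<ge> 0"
  shows "c/(c+s) \<le> 1 + (- (a+2*t)/(a+t)^2) * s + 1/(a+t)^2 * s^2"
proof -
  have "c/(c+s) \<le> a/(a+s)"
    using assms by (simp add: field_simps) (simp add: mult_right_mono)
  moreover have "1 + (- (a+2*t)/(a+t)^2) * s + 1/(a+t)^2 * s^2 - a/(a+s) = s*(s-t)^2/((a+t)^2*(a+s))" (is "?l = ?r")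
  proof -
    have "a+t \<noteq> 0" "a+s \<noteq> 0" using assms by auto
    then show "?l = ?r" by (simp add: field_simps) algebra
  qed
  moreover have "s*(s-t)^2/((a+t)^2*(a+s)) \<ge> 0" using assms by simp
  ultimately show ?thesis by linarith
qed

lemma aux3: fixes p q m d e :: real assumes "d \<noteq> 0" "e \<noteq> 0"
  shows "p*p/e - (p/d + m/d^2 * p - m/d^2 * q) = (p*p*d^2 - e*(p*d + m*p - m*q))/(e*d^2)"
  using assms by (simp add: field_simps) algebra

lemma aux3b: fixes p q m :: real
  shows "p*p*(1+m)^2 - (p+m*q)*(p*(1+m) + m*p - m*q) = m^2*(p-q)^2"
  by algebra

lemma avg_low:
  fixes p q m :: real assumes "p > 0" "q > 0" "m \<ge> 0"
  shows "p/(1+m) + m/(1+m)^2 * p - m/(1+m)^2 * q \<le> p * ((p/q)/((p/q)+m))"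
proof -
  have e: "p + m*q > 0" using assms by (simp add: add_pos_nonneg)
  have "(p/q)/((p/q)+m) = p/(p+m*q)" using assms by (simp add: field_simps)
  then have "p * ((p/q)/((p/q)+m)) = p*p/(p+m*q)" by simp
  moreover have "p*p/(p+m*q) - (p/(1+m) + m/(1+m)^2 * p - m/(1+m)^2 * q) = m^2*(p-q)^2/((p+m*q)*(1+m)^2)"
    using aux3[of "1+m" "p+m*q" p m q] aux3b[of p m q] assms e by simp
  moreover have "m^2*(p-q)^2/((p+m*q)*(1+m)^2) \<ge> 0" using assms e by simp
  ultimately show ?thesis by linarith
qed


lemma interp_up:
  fixes a n lam :: real
  assumes a: "a > 0" and n: "n \<ge> 1" "n \<le> lam" "lam < n + 1"
  defines "t \<equiv> (lam - 1) + a"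
  defines "B \<equiv> - (a+2*t)/(a+t)^2" and "G \<equiv> 1/(a+t)^2"
  shows "(n+1-lam) * (1 + B*(n-1) + G*((n-1)*((n-1)+a-1)))
       + (1-(n+1-lam)) * (1 + B*(n+1-1) + G*((n+1-1)*((n+1-1)+a-1)))
     \<le> 2*a/(2*a+(lam-1))"
proof -
  define m where "m = lam - 1"
  define b where "b = n + 1 - lam"
  have "(n+1-lam)*(lam-n) \<le> 1*(lam-n)" using n by (intro mult_right_mono) auto
  then have b: "0 < b" "b \<le> 1" "b*(1-b) \<le> m" using n unfolding b_def m_def
    by (auto simp: algebra_simps)
  have G: "G \<ge> 0" unfolding G_def by simp
  have eq1: "(n+1-lam) * (1 + B*(n-1) + G*((n-1)*((n-1)+a-1)))
       + (1-(n+1-lam)) * (1 + B*(n+1-1) + G*((n+1-1)*((n+1-1)+a-1)))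
     = 1 + B*m + G*(m^2 + b*(1-b) + m*(a-1))"
    unfolding m_def b_def by (simp add: algebra_simps power2_eq_square)
  have "G*(m^2 + b*(1-b) + m*(a-1)) \<le> G*(m^2 + m*a)"
    using G b by (intro mult_left_mono) (auto simp: algebra_simps)
  moreover have "1 + B*m + G*(m^2 + m*a) = 2*a/(2*a+m)"
  proof -
    have m0: "m \<ge> 0" using n unfolding m_def by simp
    have ne: "2*a+m \<noteq> 0" using a m0 by simp
    have at: "a + t = 2*a+m" unfolding t_def m_def by simp
    have "B = -(3*a+2*m)/(2*a+m)^2" unfolding B_def at[symmetric] unfolding t_def m_def by simp
    moreover have "G = 1/(2*a+m)^2" unfolding G_def at by simp
    ultimately have "1 + B*m + G*(m^2 + m*a) = 1 + (-(3*a+2*m)/(2*a+m)^2)*m + (1/(2*a+m)^2)*(m^2+m*a)"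
      by simp
    also have "\<dots> = 2*a/(2*a+m)"
      using ne by (simp add: field_simps) algebra
    finally show ?thesis .
  qed
  ultimately show ?thesis using eq1 unfolding m_def by linarith
qed

lemma interp_low_pt:
  fixes w n lam :: real assumes "w > 0" "n \<ge> 1"
  shows "(n+1-lam) * (w/(w+(n-1))) + (1-(n+1-lam)) * (w/(w+(n+1-1)))
     = w * (w + 2*n - lam) / ((w+n)*(w+n-1))"
proof -
  have "w + (n-1) \<noteq> 0" "w + n \<noteq> 0" "w+n-1 \<noteq> 0" using assms by auto
  then show ?thesis by (simp add: field_simps)
qed

lemma blam_eq: fixes n k lam :: real assumes "n \<noteq> 0" "k \<noteq> 0" "k = n + 1"
  shows "1/n - (lam - n)/(k*n) = (2*n+1-lam)/(n*k)"
  using assms(1,2) apply (simp add: field_simps) using assms(3) by algebra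

lemma interp_blam': fixes n k lam :: real assumes "n \<noteq> 0" "k \<noteq> 0" "k = n + 1"
  shows "(k-lam) * (1/n) + (1-(k-lam)) * (1/k) = 1/n - (lam - n)/(k*n)"
  using assms(1,2) apply (simp add: field_simps) using assms(3) by algebra

lemma interp_blam:
  fixes n lam :: real assumes "n \<ge> 1"
  shows "(n+1-lam) * (1/n) + (1-(n+1-lam)) * (1/(n+1)) = 1/n - (lam - n)/((n+1)*n)"
  using interp_blam'[of n "n+1" lam] assms by simp

lemma inv_le_blam:
  fixes n lam :: real assumes "n \<ge> 1" "n \<le> lam" "lam < n + 1"
  shows "1/lam \<le> 1/n - (lam - n)/((n+1)*n)"
proof -
  have l: "lam > 0" using assms by simp
  have "1/n - (lam - n)/((n+1)*n) = (2*n+1-lam)/(n*(n+1))"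
    using blam_eq[of n "n+1" lam] assms by simp
  moreover have "1/lam \<le> (2*n+1-lam)/(n*(n+1))"
  proof -
    have "(lam - n)*(n+1-lam) \<ge> 0" using assms by simp
    then have "n*(n+1) \<le> (2*n+1-lam)*lam" by (simp add: algebra_simps)
    moreover obtain d where d: "d = n*(n+1)" by blast
    moreover have "d > 0" using d assms by simp
    ultimately show ?thesis using l by (simp add: field_simps)
  qed
  ultimately show ?thesis by simp
qed

lemma ratio_mono:
  fixes x y :: real assumes "x \<le> y" "y < 1"
  shows "(1+x)/(1-x) \<le> (1+y)/(1-y)"
  using assms by (simp add: field_simps)


context
  fixes M :: "'a measure" and p q :: "'a \<Rightarrow> real"
  assumes pm[measurable]: "p \<in> borel_measurable M" and qm[measurable]: "q \<in> borel_measurable M"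
    and p0: "\<And>x. x \<in> space M \<Longrightarrow> p x \<ge> 0"
    and q0: "\<And>x. x \<in> space M \<Longrightarrow> q x \<ge> 0"
    and pint: "(\<integral>\<^sup>+x. ennreal (p x) \<partial>M) = 1"
    and qint: "(\<integral>\<^sup>+x. ennreal (q x) \<partial>M) = 1"
    and pq: "\<And>x. x \<in> space M \<Longrightarrow> p x > 0 \<Longrightarrow> q x > 0"
    and bdd: "bdd_above (iw p q ` space M)"
begin

lemma w_meas[measurable]: "iw p q \<in> borel_measurable M"
  unfolding iw_def by measurable

lemma w_nonneg: "x \<in> space M \<Longrightarrow> iw p q x \<ge> 0"
  unfolding iw_def using p0 q0 by auto

lemma w_le: "x \<in> space M \<Longrightarrow> iw p q x \<le> (SUP y\<in>space M. iw p q y)"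
  using bdd by (intro cSUP_upper) auto

lemma Q_prob: "prob_space (density M (\<lambda>x. ennreal (q x)))"
  by (rule prob_spaceI) (auto simp: emeasure_density qint cong: nn_integral_cong)

lemma p_integrable: "integrable M p"
  using pint p0 by (intro integrableI_nonneg) (auto simp: AE_I2)

lemma q_integrable: "integrable M q"
  using qint q0 by (intro integrableI_nonneg) (auto simp: AE_I2)

lemma p_integral: "integral\<^sup>L M p = 1"
  using pint p0 by (subst integral_eq_nn_integral) (auto simp: AE_I2)

lemma q_integral: "integral\<^sup>L M q = 1"
  using qint q0 by (subst integral_eq_nn_integral) (auto simp: AE_I2)

abbreviation "Qm \<equiv> density M (\<lambda>x. ennreal (q x))"
abbreviation "supw \<equiv> (SUP y\<in>space M. iw p q y)"

lemma w_meas_Q[measurable]: "iw p q \<in> borel_measurable Qm"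
  by simp

lemma w_int: "integrable Qm (iw p q)"
proof -
  interpret prob_space Qm by (rule Q_prob)
  show ?thesis
    by (rule integrable_const_bound[where B=supw]) (auto intro!: AE_I2 simp: w_nonneg w_le)
qed

lemma w2_int: "integrable Qm (\<lambda>x. (iw p q x)^2)"
proof -
  interpret prob_space Qm by (rule Q_prob)
  show ?thesis
    by (rule integrable_const_bound[where B="supw^2"]) (auto intro!: AE_I2 power_mono simp: w_nonneg w_le)
qed

lemma w_integral: "integral\<^sup>L Qm (iw p q) = 1"
proof -
  have "integral\<^sup>L Qm (iw p q) = (\<integral>x. q x *\<^sub>R iw p q x \<partial>M)"
    by (rule integral_density) (auto intro!: AE_I2 simp: q0)
  also have "\<dots> = integral\<^sup>L M p"
  proof (rule Bochner_Integration.integral_cong)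
    fix x assume x: "x \<in> space M"
    show "q x *\<^sub>R iw p q x = p x"
      using p0[OF x] pq[OF x] by (cases "p x > 0") (auto simp: iw_def)
  qed simp
  finally show ?thesis using p_integral by simp
qed

lemma w2_integral: "integral\<^sup>L Qm (\<lambda>x. (iw p q x)^2) \<le> supw"
proof -
  have "integral\<^sup>L Qm (\<lambda>x. (iw p q x)^2) \<le> integral\<^sup>L Qm (\<lambda>x. supw * iw p q x)"
    by (rule integral_mono) (auto intro!: w2_int[unfolded power2_eq_square] w_int mult_right_mono simp: power2_eq_square w_nonneg w_le)
  also have "\<dots> = supw" using w_integral by simp
  finally show ?thesis .
qed

lemma wh_pos: "x \<in> space M \<Longrightarrow> p x > 0 \<Longrightarrow> supw > 0"
proof -
  assume x: "x \<in> space M" "p x > 0"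
  then have "iw p q x > 0" using pq[of x] by (auto simp: iw_def)
  then show ?thesis using w_le[OF x(1)] by linarith
qed

lemma P_prob: "prob_space (PiM I (\<lambda>_. Qm))"
  by (rule prob_space_PiM) (rule Q_prob)

lemma PS: "product_sigma_finite (\<lambda>_. Qm)"
  unfolding product_sigma_finite_def using prob_space_imp_sigma_finite[OF Q_prob] by simp

lemma W_meas[measurable]: "i \<in> I \<Longrightarrow> (\<lambda>zs. iw p q (zs i)) \<in> borel_measurable (PiM I (\<lambda>_. Qm))"
  by measurable

lemma W_bound: "i \<in> I \<Longrightarrow> zs \<in> space (PiM I (\<lambda>_. Qm)) \<Longrightarrow> 0 \<le> iw p q (zs i) \<and> iw p q (zs i) \<le> supw"
  by (auto simp: space_PiM PiE_def Pi_def w_nonneg w_le)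

lemma WW_int: "i \<in> I \<Longrightarrow> j \<in> I \<Longrightarrow> integrable (PiM I (\<lambda>_. Qm)) (\<lambda>zs. iw p q (zs i) * iw p q (zs j))"
proof -
  assume ij: "i \<in> I" "j \<in> I"
  interpret prob_space "PiM I (\<lambda>_. Qm)" by (rule P_prob)
  show ?thesis
  proof (rule integrable_const_bound[where B="supw * supw"])
    show "AE x in PiM I (\<lambda>_. Qm). norm (iw p q (x i) * iw p q (x j)) \<le> supw * supw"
    proof (rule AE_I2)
      fix x assume x: "x \<in> space (PiM I (\<lambda>_. Qm))"
      show "norm (iw p q (x i) * iw p q (x j)) \<le> supw * supw"
        using W_bound[OF ij(1) x] W_bound[OF ij(2) x] by (auto intro!: mult_mono simp: abs_mult)
    qed
  qed (use ij in measurable)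
qed

lemma W_int: "i \<in> I \<Longrightarrow> integrable (PiM I (\<lambda>_. Qm)) (\<lambda>zs. iw p q (zs i))"
proof -
  assume ij: "i \<in> I"
  interpret prob_space "PiM I (\<lambda>_. Qm)" by (rule P_prob)
  show ?thesis
  proof (rule integrable_const_bound[where B="supw"])
    show "AE x in PiM I (\<lambda>_. Qm). norm (iw p q (x i)) \<le> supw"
      using W_bound[OF ij(1)] by (auto intro!: AE_I2)
  qed (use ij in measurable)
qed

lemma one_int: "integrable Qm (\<lambda>_. 1::real)"
proof -
  interpret prob_space Qm by (rule Q_prob)
  show ?thesis by simp
qed

lemma one_integral: "integral\<^sup>L Qm (\<lambda>_. 1::real) = 1"
proof -
  interpret prob_space Qm by (rule Q_prob)
  show ?thesis using prob_space by simp
qed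

lemma WW_integral:
  assumes I: "finite I" and ij: "i \<in> I" "j \<in> I"
  shows "(\<integral>zs. iw p q (zs i) * iw p q (zs j) \<partial>PiM I (\<lambda>_. Qm))
     = (if i = j then integral\<^sup>L Qm (\<lambda>x. (iw p q x)^2) else 1)"
proof -
  define f where "f = (\<lambda>l x. (if l = i then iw p q x else 1) * (if l = j then iw p q x else 1))"
  have eq: "(\<Prod>l\<in>I. f l (zs l)) = iw p q (zs i) * iw p q (zs j)" for zs
    unfolding f_def prod.distrib using ij I by simp
  have fi: "integrable Qm (f l)" for l
    unfolding f_def using w_int w2_int[unfolded power2_eq_square] one_int by (cases "l = i"; cases "l = j") simp_all
  have fv: "integral\<^sup>L Qm (f l) = (if l = i \<and> l = j then integral\<^sup>L Qm (\<lambda>x. (iw p q x)^2) else 1)" for l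
    unfolding f_def using w_integral one_integral by (cases "l = i"; cases "l = j") (simp_all add: power2_eq_square)
  have "(\<integral>zs. iw p q (zs i) * iw p q (zs j) \<partial>PiM I (\<lambda>_. Qm)) = (\<integral>zs. (\<Prod>l\<in>I. f l (zs l)) \<partial>PiM I (\<lambda>_. Qm))"
    by (simp add: eq)
  also have "\<dots> = (\<Prod>l\<in>I. integral\<^sup>L Qm (f l))"
    by (rule product_sigma_finite.product_integral_prod[OF PS I fi])
  also have "\<dots> = (if i = j then integral\<^sup>L Qm (\<lambda>x. (iw p q x)^2) else 1)"
    unfolding fv using ij I by (cases "i = j") (simp_all add: prod.delta, intro prod.neutral, auto)
  finally show ?thesis .
qed

lemma W_integral:
  assumes I: "finite I" and ij: "i \<in> I"
  shows "(\<integral>zs. iw p q (zs i) \<partial>PiM I (\<lambda>_. Qm)) = 1"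
proof -
  define f where "f = (\<lambda>l x. (if l = i then iw p q x else 1))"
  have eq: "(\<Prod>l\<in>I. f l (zs l)) = iw p q (zs i)" for zs
    unfolding f_def using ij I by simp
  have fi: "integrable Qm (f l)" for l
    unfolding f_def using w_int one_int by (cases "l = i") simp_all
  have fv: "integral\<^sup>L Qm (f l) = 1" for l
    unfolding f_def using w_integral one_integral by (cases "l = i") simp_all
  have "(\<integral>zs. iw p q (zs i) \<partial>PiM I (\<lambda>_. Qm)) = (\<integral>zs. (\<Prod>l\<in>I. f l (zs l)) \<partial>PiM I (\<lambda>_. Qm))"
    by (simp add: eq)
  also have "\<dots> = (\<Prod>l\<in>I. integral\<^sup>L Qm (f l))"
    by (rule product_sigma_finite.product_integral_prod[OF PS I fi])
  also have "\<dots> = 1"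
    unfolding fv by simp
  finally show ?thesis .
qed

lemma S_integral:
  assumes I: "finite I"
  shows "(\<integral>zs. (\<Sum>i\<in>I. iw p q (zs i)) \<partial>PiM I (\<lambda>_. Qm)) = real (card I)"
  using I by (simp add: integral_sum W_int W_integral)

lemma S2_integral:
  assumes I: "finite I"
  shows "(\<integral>zs. (\<Sum>i\<in>I. iw p q (zs i))^2 \<partial>PiM I (\<lambda>_. Qm)) \<le> real (card I) * (real (card I) + supw - 1)"
proof -
  have "(\<integral>zs. (\<Sum>i\<in>I. iw p q (zs i))^2 \<partial>PiM I (\<lambda>_. Qm))
      = (\<integral>zs. (\<Sum>i\<in>I. \<Sum>j\<in>I. iw p q (zs i) * iw p q (zs j)) \<partial>PiM I (\<lambda>_. Qm))"
    by (simp add: power2_eq_square sum_product)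
  also have "\<dots> = (\<Sum>i\<in>I. \<Sum>j\<in>I. (\<integral>zs. iw p q (zs i) * iw p q (zs j) \<partial>PiM I (\<lambda>_. Qm)))"
    using I by (simp add: integral_sum WW_int integrable_sum)
  also have "\<dots> = (\<Sum>i\<in>I. \<Sum>j\<in>I. (if i = j then integral\<^sup>L Qm (\<lambda>x. (iw p q x)^2) else 1))"
    using I by (intro sum.cong refl) (simp add: WW_integral)
  also have "\<dots> \<le> (\<Sum>i\<in>I. \<Sum>j\<in>I. (if i = j then supw else 1))"
    using w2_integral by (intro sum_mono) auto
  also have "\<dots> = (\<Sum>i\<in>I. supw + (real (card I) - 1))"
  proof (rule sum.cong[OF refl])
    fix i assume i: "i \<in> I"
    have "(\<Sum>j\<in>I. (if i = j then supw else 1)) = supw + (\<Sum>j\<in>I-{i}. (if i = j then supw else 1))"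
      using I i by (simp add: sum.remove)
    also have "\<dots> = supw + (\<Sum>j\<in>I-{i}. 1)"
      by (intro arg_cong2[where f="(+)"] refl sum.cong) auto
    also have "\<dots> = supw + (real (card I) - 1)"
    proof -
      obtain c where c: "card I = Suc c" using I i by (metis card_Suc_Diff1)
      show ?thesis using I i c by (simp add: card_Diff_singleton)
    qed
    finally show "(\<Sum>j\<in>I. (if i = j then supw else 1)) = supw + (real (card I) - 1)" .
  qed
  also have "\<dots> = real (card I) * (real (card I) + supw - 1)"
    by (simp add: algebra_simps)
  finally show ?thesis .
qed

lemma S_meas: "(\<lambda>zs. \<Sum>i\<in>I. iw p q (zs i)) \<in> borel_measurable (PiM I (\<lambda>_. Qm))"
  by (rule borel_measurable_sum) (rule W_meas)

lemma S_int: "finite I \<Longrightarrow> integrable (PiM I (\<lambda>_. Qm)) (\<lambda>zs. \<Sum>i\<in>I. iw p q (zs i))"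
  by (intro Bochner_Integration.integrable_sum W_int)

lemma S2_int: "finite I \<Longrightarrow> integrable (PiM I (\<lambda>_. Qm)) (\<lambda>zs. (\<Sum>i\<in>I. iw p q (zs i))^2)"
  by (simp add: power2_eq_square sum_product integrable_sum WW_int)

lemma S_nonneg: "zs \<in> space (PiM I (\<lambda>_. Qm)) \<Longrightarrow> 0 \<le> (\<Sum>i\<in>I. iw p q (zs i))"
  by (intro sum_nonneg) (simp add: W_bound)

lemma F_int:
  assumes "c > 0"
  shows "integrable (PiM I (\<lambda>_. Qm)) (\<lambda>zs. c / (c + (\<Sum>i\<in>I. iw p q (zs i))))"
proof -
  interpret prob_space "PiM I (\<lambda>_. Qm)" by (rule P_prob)
  have [measurable]: "(\<lambda>zs. \<Sum>i\<in>I. iw p q (zs i)) \<in> borel_measurable (PiM I (\<lambda>_. Qm))"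
    by (rule S_meas)
  show ?thesis
  proof (rule integrable_const_bound[where B=1])
    show "AE x in PiM I (\<lambda>_. Qm). norm (c / (c + (\<Sum>i\<in>I. iw p q (x i)))) \<le> 1"
    proof (rule AE_I2)
      fix x assume x: "x \<in> space (PiM I (\<lambda>_. Qm))"
      show "norm (c / (c + (\<Sum>i\<in>I. iw p q (x i)))) \<le> 1"
        using S_nonneg[OF x] assms by auto
    qed
  qed measurable
qed

lemma F_lower:
  assumes I: "finite I" and c: "c > 0" and AB: "\<And>s. s \<ge> 0 \<Longrightarrow> A + B * s \<le> c / (c + s)"
  shows "A + B * real (card I) \<le> (\<integral>zs. c / (c + (\<Sum>i\<in>I. iw p q (zs i))) \<partial>PiM I (\<lambda>_. Qm))"
proof -
  interpret prob_space "PiM I (\<lambda>_. Qm)" by (rule P_prob)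
  have "A + B * real (card I) = (\<integral>zs. A + B * (\<Sum>i\<in>I. iw p q (zs i)) \<partial>PiM I (\<lambda>_. Qm))"
    using I prob_space by (simp add: S_int S_integral)
  also have "\<dots> \<le> (\<integral>zs. c / (c + (\<Sum>i\<in>I. iw p q (zs i))) \<partial>PiM I (\<lambda>_. Qm))"
    using I c by (intro integral_mono F_int Bochner_Integration.integrable_add integrable_const integrable_mult_right S_int AB S_nonneg) auto
  finally show ?thesis .
qed

lemma F_upper:
  assumes I: "finite I" and c: "c > 0" and G: "G \<ge> 0"
    and BG: "\<And>s. s \<ge> 0 \<Longrightarrow> c / (c + s) \<le> 1 + B * s + G * s^2"
  shows "(\<integral>zs. c / (c + (\<Sum>i\<in>I. iw p q (zs i))) \<partial>PiM I (\<lambda>_. Qm))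
     \<le> 1 + B * real (card I) + G * (real (card I) * (real (card I) + supw - 1))"
proof -
  interpret prob_space "PiM I (\<lambda>_. Qm)" by (rule P_prob)
  have "(\<integral>zs. c / (c + (\<Sum>i\<in>I. iw p q (zs i))) \<partial>PiM I (\<lambda>_. Qm))
      \<le> (\<integral>zs. 1 + B * (\<Sum>i\<in>I. iw p q (zs i)) + G * (\<Sum>i\<in>I. iw p q (zs i))^2 \<partial>PiM I (\<lambda>_. Qm))"
    using I c by (intro integral_mono F_int Bochner_Integration.integrable_add integrable_const integrable_mult_right S_int S2_int BG S_nonneg) auto
  also have "\<dots> = 1 + B * real (card I) + G * (\<integral>zs. (\<Sum>i\<in>I. iw p q (zs i))^2 \<partial>PiM I (\<lambda>_. Qm))"
    using I prob_space by (simp add: S_int S2_int S_integral)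
  also have "\<dots> \<le> 1 + B * real (card I) + G * (real (card I) * (real (card I) + supw - 1))"
    using I G by (intro add_left_mono mult_left_mono S2_integral)
  finally show ?thesis .
qed

lemma card_I: "k \<ge> 1 \<Longrightarrow> real (card {2..k}) = real k - 1"
  by (simp add: of_nat_diff)

lemma epsN_low:
  assumes k: "k \<ge> 1" and z: "z \<in> space M" "p z > 0"
    and AB: "\<And>s. s \<ge> 0 \<Longrightarrow> A + B * s \<le> iw p q z / (iw p q z + s)"
  shows "A + B * (real k - 1) \<le> epsN M p q k z"
proof -
  have c: "iw p q z > 0" using z pq[of z] by (simp add: iw_def)
  show ?thesis
    unfolding epsN_def using F_lower[OF _ c AB, of "{2..k}"] card_I[OF k] by simp
qed

lemma epsN_up:
  assumes k: "k \<ge> 1" and z: "z \<in> space M" "p z > 0" and G: "G \<ge> 0"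
    and BG: "\<And>s. s \<ge> 0 \<Longrightarrow> iw p q z / (iw p q z + s) \<le> 1 + B * s + G * s^2"
  shows "epsN M p q k z \<le> 1 + B * (real k - 1) + G * ((real k - 1) * ((real k - 1) + supw - 1))"
proof -
  have c: "iw p q z > 0" using z pq[of z] by (simp add: iw_def)
  show ?thesis
    unfolding epsN_def using F_upper[OF _ c G BG, of "{2..k}"] card_I[OF k] by simp
qed

lemma epsN_01:
  assumes k: "k \<ge> 1" and z: "z \<in> space M" "p z > 0"
  shows "0 \<le> epsN M p q k z" "epsN M p q k z \<le> 1"
proof -
  have c: "iw p q z > 0" using z pq[of z] by (simp add: iw_def)
  show "0 \<le> epsN M p q k z" using epsN_low[OF k z, of 0 0] c by simp
  show "epsN M p q k z \<le> 1" using epsN_up[OF k z, of 0 0] c by simp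
qed

lemma epsN_meas: "(\<lambda>z. epsN M p q k z) \<in> borel_measurable M"
proof -
  interpret sf: sigma_finite_measure "PiM {2..k} (\<lambda>_. Qm)"
    by (rule prob_space_imp_sigma_finite[OF P_prob])
  have [measurable]: "(\<lambda>zs. \<Sum>i\<in>{2..k}. iw p q (zs i)) \<in> borel_measurable (PiM {2..k} (\<lambda>_. Qm))"
    by (rule S_meas)
  show ?thesis
    unfolding epsN_def by (rule sf.borel_measurable_lebesgue_integral) measurable
qed

lemma Sset_meas[measurable]: "{x\<in>space M. p x > 0} \<in> sets M"
  by measurable

lemma avg_eq: "epsN_avg M p q k = (\<integral>z. p z * (indicator {x\<in>space M. p x > 0} z * epsN M p q k z) \<partial>M)"
proof -
  have [measurable]: "(\<lambda>z. epsN M p q k z) \<in> borel_measurable M" by (rule epsN_meas)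
  show ?thesis
    unfolding epsN_avg_def set_lebesgue_integral_def
    by (subst integral_density) (auto intro!: AE_I2 simp: p0)
qed

lemma avg_int:
  assumes k: "k \<ge> 1"
  shows "integrable M (\<lambda>z. p z * (indicator {x\<in>space M. p x > 0} z * epsN M p q k z))"
proof (rule Bochner_Integration.integrable_bound[OF p_integrable])
  have [measurable]: "(\<lambda>z. epsN M p q k z) \<in> borel_measurable M" by (rule epsN_meas)
  show "(\<lambda>z. p z * (indicator {x\<in>space M. p x > 0} z * epsN M p q k z)) \<in> borel_measurable M"
    by measurable
  show "AE x in M. norm (p x * (indicator {x\<in>space M. p x > 0} x * epsN M p q k x)) \<le> norm (p x)"
  proof (rule AE_I2)
    fix x assume x: "x \<in> space M"
    show "norm (p x * (indicator {x\<in>space M. p x > 0} x * epsN M p q k x)) \<le> norm (p x)"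
    proof (cases "p x > 0")
      case True
      then show ?thesis using epsN_01[OF k x True] x
        by (auto simp: abs_mult intro!: mult_left_le)
    qed (simp add: indicator_def)
  qed
qed

lemma avg_up:
  assumes k: "k \<ge> 1" and U: "\<And>z. z \<in> space M \<Longrightarrow> p z > 0 \<Longrightarrow> epsN M p q k z \<le> U"
  shows "epsN_avg M p q k \<le> U"
proof -
  have "epsN_avg M p q k \<le> (\<integral>z. U * p z \<partial>M)"
    unfolding avg_eq
  proof (rule integral_mono[OF avg_int[OF k]])
    show "integrable M (\<lambda>z. U * p z)" using p_integrable by simp
    fix x assume x: "x \<in> space M"
    show "p x * (indicator {x\<in>space M. p x > 0} x * epsN M p q k x) \<le> U * p x"
    proof (cases "p x > 0")
      case True
      then show ?thesis using U[OF x True] x by (simp add: mult.commute)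
    next
      case False
      then have "p x = 0" using p0[OF x] by simp
      then show ?thesis by simp
    qed
  qed
  also have "\<dots> = U" using p_integral by simp
  finally show ?thesis .
qed

lemma avg_low':
  assumes k: "k \<ge> 1"
  shows "1 / real k \<le> epsN_avg M p q k"
proof -
  define m where "m = real k - 1"
  have m0: "m \<ge> 0" using k unfolding m_def by simp
  define \<alpha> where "\<alpha> = 1/(1+m) + m/(1+m)^2"
  define \<gamma> where "\<gamma> = m/(1+m)^2"
  have "(\<integral>z. \<alpha> * p z - \<gamma> * q z \<partial>M) \<le> epsN_avg M p q k"
    unfolding avg_eq
  proof (rule integral_mono[OF _ avg_int[OF k]])
    show "integrable M (\<lambda>z. \<alpha> * p z - \<gamma> * q z)" using p_integrable q_integrable by simp
    fix x assume x: "x \<in> space M"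
    show "\<alpha> * p x - \<gamma> * q x \<le> p x * (indicator {x\<in>space M. p x > 0} x * epsN M p q k x)"
    proof (cases "p x > 0")
      case True
      have qx: "q x > 0" using pq[OF x True] .
      have c: "iw p q x = p x / q x" using True by (simp add: iw_def)
      have cpos: "p x / q x > 0" using True qx by simp
      define cc where "cc = iw p q x"
      have ccpos: "cc > 0" using cpos c unfolding cc_def by simp
      have "cc / (cc + m) \<le> epsN M p q k x"
      proof -
        have AB: "(cc/(cc+m) + cc/(cc+m)^2 * m) + (- (cc/(cc+m)^2)) * s \<le> cc / (cc + s)" if s: "s \<ge> 0" for s
        proof -
          have gen: "\<And>X Y::real. (X + Y * m) + (- Y) * s = X - Y * (s - m)"
            by (simp add: algebra_simps)
          have "(cc/(cc+m) + cc/(cc+m)^2 * m) + (- (cc/(cc+m)^2)) * s = cc/(cc+m) - cc/(cc+m)^2 * (s - m)"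
            by (rule gen)
          then show ?thesis using tangent_low[OF ccpos m0 s] by simp
        qed
        have "(cc/(cc+m) + cc/(cc+m)^2 * m) + (- (cc/(cc+m)^2)) * (real k - 1) \<le> epsN M p q k x"
          by (rule epsN_low[OF k x True]) (use AB in \<open>simp add: cc_def\<close>)
        then show ?thesis unfolding m_def[symmetric] by (simp add: algebra_simps)
      qed
      then have "iw p q x / (iw p q x + m) \<le> epsN M p q k x" unfolding cc_def .
      then have "p x * (p x / q x / (p x / q x + m)) \<le> p x * epsN M p q k x"
        using True c by (intro mult_left_mono) auto
      moreover have "\<alpha> * p x - \<gamma> * q x \<le> p x * (p x / q x / (p x / q x + m))"
        using avg_low[OF True qx m0] unfolding \<alpha>_def \<gamma>_def by (simp add: algebra_simps)
      ultimately show ?thesis using x True by simp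
    next
      case False
      then have "p x = 0" using p0[OF x] by simp
      moreover have "\<gamma> * q x \<ge> 0" unfolding \<gamma>_def using m0 q0[OF x] by simp
      ultimately show ?thesis by simp
    qed
  qed
  moreover have "(\<integral>z. \<alpha> * p z - \<gamma> * q z \<partial>M) = \<alpha> - \<gamma>"
    using p_integrable q_integrable p_integral q_integral by simp
  moreover have "\<alpha> - \<gamma> = 1 / real k" unfolding \<alpha>_def \<gamma>_def m_def using k by simp
  ultimately show ?thesis by simp
qed

lemma main_core:
  assumes lam: "lam \<ge> 1" and z1: "z1 \<in> space M" "p z1 > 0"
  shows
   "(let supw = (SUP x\<in>space M. iw p q x); w1 = iw p q z1; n = real (nat \<lfloor>lam\<rfloor>) in
      0 < w1 * (w1 + 2 * n - lam) / ((w1 + n) * (w1 + n - 1))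
    \<and> w1 * (w1 + 2 * n - lam) / ((w1 + n) * (w1 + n - 1)) \<le> epsL M p q lam z1
    \<and> epsL M p q lam z1 \<le> 2 * supw / (2 * supw + lam - 1)
    \<and> 1 / lam \<le> blam lam
    \<and> blam lam \<le> epsL_avg M p q lam
    \<and> epsL_avg M p q lam \<le> 2 * supw / (2 * supw + lam - 1)
    \<and> (lam > 1 \<longrightarrow>
          1 < (n\<^sup>2 + 3 * n - lam + 1) / (n\<^sup>2 - n + lam - 1)
        \<and> (n\<^sup>2 + 3 * n - lam + 1) / (n\<^sup>2 - n + lam - 1)
            \<le> (1 + epsL_avg M p q lam) / (1 - epsL_avg M p q lam)
        \<and> (1 + epsL_avg M p q lam) / (1 - epsL_avg M p q lam)
            \<le> (4 * supw + lam - 1) / (lam - 1)))"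
proof -
  define a where "a = supw"
  define N where "N = nat \<lfloor>lam\<rfloor>"
  define n where "n = real N"
  define w1 where "w1 = iw p q z1"
  have N1: "N \<ge> 1" unfolding N_def using lam by linarith
  have n1: "n \<ge> 1" unfolding n_def using N1 by simp
  have nl: "n \<le> lam" "lam < n + 1" unfolding n_def N_def using lam by linarith+
  have nS: "real (N + 1) = n + 1" unfolding n_def by simp
  have apos: "a > 0" unfolding a_def using wh_pos[OF z1] .
  have w1pos: "w1 > 0" unfolding w1_def using z1 pq[OF z1(1)] by (simp add: iw_def)
  define \<beta> where "\<beta> = n + 1 - lam"
  have \<beta>: "0 < \<beta>" "\<beta> \<le> 1" unfolding \<beta>_def using nl by auto
  have epsL_eq: "epsL M p q lam z = \<beta> * epsN M p q N z + (1 - \<beta>) * epsN M p q (N+1) z" for z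
    unfolding epsL_def Let_def \<beta>_def n_def N_def by simp
  have epsLavg_eq: "epsL_avg M p q lam = \<beta> * epsN_avg M p q N + (1 - \<beta>) * epsN_avg M p q (N+1)"
    unfolding epsL_avg_def Let_def \<beta>_def n_def N_def by simp
  have blam_eq': "blam lam = 1/n - (lam - n)/((n+1)*n)"
    unfolding blam_def n_def N_def by simp
  define t where "t = (lam - 1) + a"
  define B where "B = - (a+2*t)/(a+t)^2"
  define G where "G = 1/(a+t)^2"
  define U where "U = (\<lambda>k::real. 1 + B*(k-1) + G*((k-1)*((k-1)+a-1)))"
  have G0: "G \<ge> 0" unfolding G_def by simp
  have t0: "t \<ge> 0" unfolding t_def using lam apos by simp
  have Ubound: "\<beta> * U n + (1 - \<beta>) * U (n+1) \<le> 2*a/(2*a+(lam-1))"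
    using interp_up[OF apos n1 nl] unfolding U_def B_def G_def t_def \<beta>_def by simp
  have e2: "2*a+(lam-1) = 2*a+lam-1" by simp
  note Ubound = Ubound[unfolded e2]
  have upk: "epsN M p q k z \<le> U (real k)" if k: "k \<ge> 1" and z: "z \<in> space M" "p z > 0" for k z
  proof -
    have cz: "iw p q z > 0" using z pq[OF z(1)] by (simp add: iw_def)
    have "epsN M p q k z \<le> 1 + B * (real k - 1) + G * ((real k - 1) * ((real k - 1) + supw - 1))"
    proof (rule epsN_up[OF k z G0])
      fix s :: real assume s: "s \<ge> 0"
      show "iw p q z / (iw p q z + s) \<le> 1 + B * s + G * s^2"
        using quad_up[OF cz _ s t0, of a] w_le[OF z(1)] unfolding B_def G_def a_def by simp
    qed
    then show ?thesis unfolding U_def a_def by simp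
  qed
  have low_pt: "w1 * (w1 + 2 * n - lam) / ((w1 + n) * (w1 + n - 1)) \<le> epsL M p q lam z1"
  proof -
    have lowk: "w1 / (w1 + (real k - 1)) \<le> epsN M p q k z1" if k: "k \<ge> 1" for k
    proof -
      define m where "m = real k - 1"
      have m0: "m \<ge> 0" unfolding m_def using k by simp
      have AB: "(w1/(w1+m) + w1/(w1+m)^2 * m) + (- (w1/(w1+m)^2)) * s \<le> w1 / (w1 + s)" if s: "s \<ge> 0" for s
      proof -
        have gen: "\<And>X Y::real. (X + Y * m) + (- Y) * s = X - Y * (s - m)"
          by (simp add: algebra_simps)
        show ?thesis unfolding gen using tangent_low[OF w1pos m0 s] .
      qed
      have "(w1/(w1+m) + w1/(w1+m)^2 * m) + (- (w1/(w1+m)^2)) * (real k - 1) \<le> epsN M p q k z1"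
        by (rule epsN_low[OF k z1]) (use AB in \<open>simp add: w1_def\<close>)
      then show ?thesis unfolding m_def[symmetric] by (simp add: algebra_simps)
    qed
    have "w1 * (w1 + 2 * n - lam) / ((w1 + n) * (w1 + n - 1))
        = \<beta> * (w1/(w1+(n-1))) + (1-\<beta>) * (w1/(w1+(n+1-1)))"
      unfolding \<beta>_def using interp_low_pt[OF w1pos n1, of lam] by simp
    also have "\<dots> \<le> \<beta> * epsN M p q N z1 + (1 - \<beta>) * epsN M p q (N+1) z1"
      using lowk[OF N1] lowk[of "N+1"] \<beta> nS unfolding n_def
      by (intro add_mono mult_left_mono) auto
    finally show ?thesis unfolding epsL_eq .
  qed
  have up_pt: "epsL M p q lam z1 \<le> 2 * a / (2 * a + lam - 1)"
  proof -
    have "epsL M p q lam z1 \<le> \<beta> * U n + (1 - \<beta>) * U (n+1)"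
      unfolding epsL_eq using upk[OF N1 z1] upk[of "N+1", OF _ z1] \<beta> nS unfolding n_def
      by (intro add_mono mult_left_mono) (auto simp: add.commute)
    then show ?thesis using Ubound by simp
  qed
  have pos: "0 < w1 * (w1 + 2 * n - lam) / ((w1 + n) * (w1 + n - 1))"
    using w1pos n1 nl by (intro divide_pos_pos mult_pos_pos) auto
  have lam_b: "1 / lam \<le> blam lam"
    unfolding blam_eq' using inv_le_blam[OF n1 nl] .
  have avg_lo: "blam lam \<le> epsL_avg M p q lam"
  proof -
    have "blam lam = \<beta> * (1/n) + (1 - \<beta>) * (1/(n+1))"
      unfolding blam_eq' \<beta>_def using interp_blam[OF n1, of lam] by simp
    also have "\<dots> \<le> \<beta> * epsN_avg M p q N + (1 - \<beta>) * epsN_avg M p q (N+1)"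
      using avg_low'[OF N1] avg_low'[of "N+1"] \<beta> nS unfolding n_def
      by (intro add_mono mult_left_mono) (auto simp: add.commute)
    finally show ?thesis unfolding epsLavg_eq .
  qed
  have avg_hi: "epsL_avg M p q lam \<le> 2 * a / (2 * a + lam - 1)"
  proof -
    have "epsL_avg M p q lam \<le> \<beta> * U n + (1 - \<beta>) * U (n+1)"
      unfolding epsLavg_eq
      using avg_up[OF N1, of "U n"] avg_up[of "N+1" "U (n+1)"] upk[OF N1] upk[of "N+1"] \<beta> nS unfolding n_def
      by (intro add_mono mult_left_mono) (auto simp: add.commute)
    then show ?thesis using Ubound by simp
  qed
  have ratio: "lam > 1 \<longrightarrow>
          1 < (n\<^sup>2 + 3 * n - lam + 1) / (n\<^sup>2 - n + lam - 1)
        \<and> (n\<^sup>2 + 3 * n - lam + 1) / (n\<^sup>2 - n + lam - 1)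
            \<le> (1 + epsL_avg M p q lam) / (1 - epsL_avg M p q lam)
        \<and> (1 + epsL_avg M p q lam) / (1 - epsL_avg M p q lam)
            \<le> (4 * a + lam - 1) / (lam - 1)"
  proof
    assume l1: "lam > 1"
    define e where "e = epsL_avg M p q lam"
    define f where "f = 2 * a / (2 * a + lam - 1)"
    have fpos: "2*a + lam - 1 > 0" using apos l1 by simp
    have f1: "f < 1" unfolding f_def using fpos l1 by simp
    have ef: "e \<le> f" unfolding e_def f_def using avg_hi .
    have be: "blam lam \<le> e" unfolding e_def using avg_lo .
    have r1: "(1+e)/(1-e) \<le> (1+f)/(1-f)" using ratio_mono[OF ef f1] .
    have r2: "(1+f)/(1-f) = (4 * a + lam - 1) / (lam - 1)"
    proof -
      have "1 - f = (lam - 1)/(2*a+lam-1)" "1 + f = (4*a+lam-1)/(2*a+lam-1)"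
        unfolding f_def using fpos by (simp_all add: field_simps)
      then show ?thesis using fpos l1 by simp
    qed
    have r3: "(1 + blam lam)/(1 - blam lam) \<le> (1+e)/(1-e)"
      using ratio_mono[OF be] ef f1 by simp
    obtain d where d: "d = n*(n+1)" by blast
    have dpos: "d > 0" using d n1 by simp
    have bl: "blam lam = (2*n+1-lam)/d"
      unfolding blam_eq' d using blam_eq[of n "n+1" lam] n1 by simp
    have den: "n\<^sup>2 - n + lam - 1 > 0"
    proof -
      have "n\<^sup>2 \<ge> n" using n1 by (simp add: power2_eq_square)
      then show ?thesis using l1 by simp
    qed
    have r4: "(1 + blam lam)/(1 - blam lam) = (n\<^sup>2 + 3 * n - lam + 1) / (n\<^sup>2 - n + lam - 1)"
    proof -
      have "1 + blam lam = (d + 2*n+1-lam)/d" "1 - blam lam = (d - 2*n - 1 + lam)/d"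
        unfolding bl using dpos by (simp_all add: field_simps)
      moreover have "d + 2*n+1-lam = n\<^sup>2 + 3 * n - lam + 1" "d - 2*n - 1 + lam = n\<^sup>2 - n + lam - 1"
        unfolding d by (simp_all add: power2_eq_square algebra_simps)
      ultimately show ?thesis using dpos by simp
    qed
    have r5: "1 < (n\<^sup>2 + 3 * n - lam + 1) / (n\<^sup>2 - n + lam - 1)"
      using den nl n1 by (simp add: field_simps)
    show "1 < (n\<^sup>2 + 3 * n - lam + 1) / (n\<^sup>2 - n + lam - 1)
        \<and> (n\<^sup>2 + 3 * n - lam + 1) / (n\<^sup>2 - n + lam - 1)
            \<le> (1 + epsL_avg M p q lam) / (1 - epsL_avg M p q lam)
        \<and> (1 + epsL_avg M p q lam) / (1 - epsL_avg M p q lam)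
            \<le> (4 * a + lam - 1) / (lam - 1)"
      using r1 r2 r3 r4 r5 unfolding e_def by simp
  qed
  show ?thesis
    unfolding Let_def
    using pos low_pt up_pt lam_b avg_lo avg_hi ratio
    unfolding a_def n_def N_def w1_def by blast
qed

end

theorem lemma8p1:
  fixes M :: "'a measure" and p q :: "'a \<Rightarrow> real" and lam :: real and z1 :: 'a
  assumes "sigma_finite_measure M"
    and "p \<in> borel_measurable M" and "q \<in> borel_measurable M"
    and "\<And>x. x \<in> space M \<Longrightarrow> p x \<ge> 0"
    and "\<And>x. x \<in> space M \<Longrightarrow> q x \<ge> 0"
    and "(\<integral>\<^sup>+x. ennreal (p x) \<partial>M) = 1"
    and "(\<integral>\<^sup>+x. ennreal (q x) \<partial>M) = 1"
    and "\<And>x. x \<in> space M \<Longrightarrow> p x > 0 \<Longrightarrow> q x > 0"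
    and "bdd_above (iw p q ` space M)"
    and "lam \<ge> 1"
    and "z1 \<in> space M" and "p z1 > 0"
  shows
   "(let wh = (SUP x\<in>space M. iw p q x); w1 = iw p q z1; n = real (nat \<lfloor>lam\<rfloor>) in
      0 < w1 * (w1 + 2 * n - lam) / ((w1 + n) * (w1 + n - 1))
    \<and> w1 * (w1 + 2 * n - lam) / ((w1 + n) * (w1 + n - 1)) \<le> epsL M p q lam z1
    \<and> epsL M p q lam z1 \<le> 2 * wh / (2 * wh + lam - 1)
    \<and> 1 / lam \<le> blam lam
    \<and> blam lam \<le> epsL_avg M p q lam
    \<and> epsL_avg M p q lam \<le> 2 * wh / (2 * wh + lam - 1)
    \<and> (lam > 1 \<longrightarrow>
          1 < (n\<^sup>2 + 3 * n - lam + 1) / (n\<^sup>2 - n + lam - 1)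
        \<and> (n\<^sup>2 + 3 * n - lam + 1) / (n\<^sup>2 - n + lam - 1)
            \<le> (1 + epsL_avg M p q lam) / (1 - epsL_avg M p q lam)
        \<and> (1 + epsL_avg M p q lam) / (1 - epsL_avg M p q lam)
            \<le> (4 * wh + lam - 1) / (lam - 1)))"
  using main_core[OF assms(2-9) assms(10-12)] .

end
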